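(* Let $n\ge3$. For a Boolean algebra $\mathbf A$ let $\mathbf A^r$ be the algebra on $A$ with ternary operations $t_1(x,y,z)=x(y'+z)$, $t_h(x,y,z)=xz$ for $2\le h\le n-2$, $t_{n-1}(x,y,z)=z(y'+x)$. Let $\mathbf A_1=\mathbf A_2=\mathbf 4^r$ and $\mathbf A_3=\mathbf 2^r$, where $\mathbf 4$ and $\mathbf 2$ are the $4$- and $2$-element Boolean algebras (distinguished element $0$). Let $\mathbf D$ be an algebra with ternary operations $s_0,\dots,s_{n-2}$ and let $\mathbf A_4$ be the algebra on $D$ with operations $t_{i+1}=s_i$ ($0\le i\le n-2$); assume $t_1$ is the first projection, $t_{n-1}$ the third projection and $t_h(x,y,x)=x$ for $2\le h\le n-2$ in $\mathbf A_4$. For $a,d\in A_4$ let $\mathbf B(a,d)$ be the subalgebra of $\mathbf A_1\times\mathbf A_2\times\mathbf A_3\times\mathbf A_4$ whose universe is the set of elements of at least one of the forms $(\ast,0,\ast,a)$, $(0,0,\ast,\ast)$, $(0,\ast,\ast,d)$, $(\ast,\ast,0,\ast)$. (i) If $n$ is even and $s_0,\dots,s_{n-2}$ are J\'onsson operations for $\mathbf D$ (with $n-2$ in place of $n$), then for all $a,d$ the algebra $\mathbf B(a,d)$ is $n$-alvin (with operations $t_1,\dots,t_{n-1}$ together with the first and third projections as $t_0,t_n$). (ii) If for some $r$ and some congruences $\tilde\alpha,\tilde\beta,\tilde\gamma$ of $\mathbf A_4$ the inclusion $\tilde\alpha(\tilde\beta\circ\tilde\alpha\tilde\gamma\circ\tilde\beta)\subseteq\tilde\alpha\tilde\gamma\circ\tilde\alpha\tilde\beta\circ\stackrel{r}{\dots}$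 fails, then there are $a,d\in A_4$ and congruences $\alpha,\beta,\gamma$ of $\mathbf B(a,d)$ such that $\alpha(\beta\circ\alpha\gamma\circ\beta)\subseteq\alpha\beta\circ\alpha\gamma\circ\stackrel{r+2}{\dots}$ fails.
   Context: Boolean operations: juxtaposition (meet), $+$ (join), $'$ (complement). For relations juxtaposition is intersection and $\circ$ composition; $X\circ Y\circ\stackrel{k}{\dots}$ is the alternating composition $X\circ Y\circ X\circ\cdots$ with $k$ factors. J\'onsson (alvin) operations $t_0,\dots,t_n$: $t_0(x,y,z)=x$, $t_n(x,y,z)=z$, $t_h(x,y,x)=x$ for all $h$, $t_h(x,x,z)=t_{h+1}(x,x,z)$ for even $h$ and $t_h(x,z,z)=t_{h+1}(x,z,z)$ for odd $h$ (alvin: even/odd exchanged); an algebra is $n$-alvin if it has alvin terms $t_0,\dots,t_n$. *)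

theory Defs
  imports Main
begin

type_synonym 'a top3 = "nat \<Rightarrow> 'a \<Rightarrow> 'a \<Rightarrow> 'a \<Rightarrow> 'a"

definition jonsson :: "'a set \<Rightarrow> nat \<Rightarrow> 'a top3 \<Rightarrow> bool" where
  "jonsson S n t \<longleftrightarrow> (\<forall>x\<in>S. \<forall>y\<in>S. \<forall>z\<in>S.
     t 0 x y z = x \<and> t n x y z = z \<and> (\<forall>h\<le>n. t h x y x = x) \<and>
     (\<forall>h<n. even h \<longrightarrow> t h x x z = t (Suc h) x x z) \<and>
     (\<forall>h<n. odd h \<longrightarrow> t h x z z = t (Suc h) x z z))"

definition alvin :: "'a set \<Rightarrow> nat \<Rightarrow> 'a top3 \<Rightarrow> bool" where
  "alvin S n t \<longleftrightarrow> (\<forall>x\<in>S. \<forall>y\<in>S. \<forall>z\<in>S.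
     t 0 x y z = x \<and> t n x y z = z \<and> (\<forall>h\<le>n. t h x y x = x) \<and>
     (\<forall>h<n. odd h \<longrightarrow> t h x x z = t (Suc h) x x z) \<and>
     (\<forall>h<n. even h \<longrightarrow> t h x z z = t (Suc h) x z z))"

definition ext_proj :: "nat \<Rightarrow> 'a top3 \<Rightarrow> 'a top3" where
  "ext_proj n t h x y z = (if h = 0 then x else if h = n then z else t h x y z)"

definition congruence :: "'a set \<Rightarrow> nat \<Rightarrow> 'a top3 \<Rightarrow> ('a \<times> 'a) set \<Rightarrow> bool" where
  "congruence S n t \<theta> \<longleftrightarrow> equiv S \<theta> \<and>
     (\<forall>h\<in>{1..n-1}. \<forall>x x' y y' z z'. (x,x') \<in> \<theta> \<longrightarrow> (y,y') \<in> \<theta> \<longrightarrow> (z,z') \<in> \<theta> \<longrightarrow>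
        (t h x y z, t h x' y' z') \<in> \<theta>)"

fun altc :: "('a \<times> 'a) set \<Rightarrow> ('a \<times> 'a) set \<Rightarrow> nat \<Rightarrow> ('a \<times> 'a) set" where
  "altc X Y 0 = Id"
| "altc X Y (Suc k) = X O altc Y X k"

definition rops :: "nat \<Rightarrow> 'a::boolean_algebra top3" where
  "rops n h x y z = (if h = 1 then inf x (sup (- y) z)
                     else if h = n - 1 then inf z (sup (- y) x)
                     else inf x z)"

text \<open>A_1 = A_2 = 4^r (4 = bool set), A_3 = 2^r (2 = bool), A_4 on D with t_(i+1) = s_i.\<close>
definition prod_ops :: "nat \<Rightarrow> 'd top3 \<Rightarrow> (bool set \<times> bool set \<times> bool \<times> 'd) top3" where
  "prod_ops n s h x y z =
     (case x of (x1,x2,x3,x4) \<Rightarrow> case y of (y1,y2,y3,y4) \<Rightarrow> case z of (z1,z2,z3,z4) \<Rightarrow>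
       (rops n h x1 y1 z1, rops n h x2 y2 z2, rops n h x3 y3 z3, s (h - 1) x4 y4 z4))"

definition A4_ops :: "'d top3 \<Rightarrow> 'd top3" where
  "A4_ops s h = s (h - 1)"

definition Bset :: "'d \<Rightarrow> 'd \<Rightarrow> (bool set \<times> bool set \<times> bool \<times> 'd) set" where
  "Bset a d = {(x1,x2,x3,x4). (x2 = {} \<and> x4 = a) \<or> (x1 = {} \<and> x2 = {}) \<or>
                              (x1 = {} \<and> x4 = d) \<or> x3 = False}"

end

theory Submission imports Defs begin

lemma altc_Suc_right: "altc X Y (Suc k) = altc X Y k O (if even k then X else Y)"
proof (induction k arbitrary: X Y)
  case 0 then show ?case by simp
next
  case (Suc k)
  have "altc X Y (Suc (Suc k)) = X O altc Y X (Suc k)" by simp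
  also have "\<dots> = X O (altc Y X k O (if even k then Y else X))" using Suc.IH by simp
  also have "\<dots> = altc X Y (Suc k) O (if even (Suc k) then X else Y)" by (simp add: O_assoc)
  finally show ?case .
qed

lemma altc_proj:
  assumes "(x,y) \<in> altc X Y k"
    and "\<And>a b. (a,b)\<in>X \<Longrightarrow> (f a, f b) \<in> X'"
    and "\<And>a b. (a,b)\<in>Y \<Longrightarrow> (f a, f b) \<in> Y'"
  shows "(f x, f y) \<in> altc X' Y' k"
  using assms
proof (induction k arbitrary: X Y X' Y' x)
  case 0 then show ?case by simp
next
  case (Suc k)
  from Suc.prems(1) obtain z where "(x,z) \<in> X" "(z,y) \<in> altc Y X k" by auto
  moreover have "(f z, f y) \<in> altc Y' X' k"
    using Suc.IH[where X=Y and Y=X and X'=Y' and Y'=X'] Suc.prems \<open>(z,y) \<in> altc Y X k\<close> by blast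
  ultimately show ?case using Suc.prems by auto
qed

lemma prod_ops_alt:
  "prod_ops n s h x y z = (rops n h (fst x) (fst y) (fst z), rops n h (fst (snd x)) (fst (snd y)) (fst (snd z)),
     rops n h (fst (snd (snd x))) (fst (snd (snd y))) (fst (snd (snd z))),
     s (h - 1) (snd (snd (snd x))) (snd (snd (snd y))) (snd (snd (snd z))))"
  by (cases x; cases y; cases z) (simp add: prod_ops_def)

lemma Bset_closed:
  assumes n3: "n \<ge> 3" and t1: "\<And>x y z. s 0 x y z = x" and tn1: "\<And>x y z. s (n-2) x y z = z"
    and tmid: "\<And>h x y. 2 \<le> h \<Longrightarrow> h \<le> n-2 \<Longrightarrow> s (h-1) x y x = x"
    and h: "h \<in> {1..n-1}" and xB: "x \<in> Bset a d" and yB: "y \<in> Bset a d" and zB: "z \<in> Bset a d"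
  shows "prod_ops n s h x y z \<in> Bset a d"
proof -
  obtain x1 x2 x3 x4 where x: "x = (x1,x2,x3,x4)" by (cases x)
  obtain y1 y2 y3 y4 where y: "y = (y1,y2,y3,y4)" by (cases y)
  obtain z1 z2 z3 z4 where z: "z = (z1,z2,z3,z4)" by (cases z)
  have xB': "(x2 = {} \<and> x4 = a) \<or> (x1 = {} \<and> x2 = {}) \<or> (x1 = {} \<and> x4 = d) \<or> x3 = False"
    using xB unfolding x Bset_def by simp
  have zB': "(z2 = {} \<and> z4 = a) \<or> (z1 = {} \<and> z2 = {}) \<or> (z1 = {} \<and> z4 = d) \<or> z3 = False"
    using zB unfolding z Bset_def by simp
  have "h = 1 \<or> h = n - 1 \<or> (2 \<le> h \<and> h \<le> n - 2)" using h n3 by auto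
  then consider "h = 1" | "h = n - 1" | "2 \<le> h \<and> h \<le> n - 2" by blast
  then show ?thesis
  proof cases
    case 1
    have r: "prod_ops n s h x y z = (x1 \<inter> (- y1 \<union> z1), x2 \<inter> (- y2 \<union> z2), x3 \<and> (\<not> y3 \<or> z3), x4)"
      using 1 t1 unfolding x y z by (simp add: prod_ops_def rops_def)
    show ?thesis unfolding r Bset_def using xB' by (elim disjE; simp)
  next
    case 2
    have "h - 1 = n - 2" "h \<noteq> 1" using 2 n3 by auto
    then have r: "prod_ops n s h x y z = (z1 \<inter> (- y1 \<union> x1), z2 \<inter> (- y2 \<union> x2), z3 \<and> (\<not> y3 \<or> x3), z4)"
      using 2 tn1 unfolding x y z by (simp add: prod_ops_def rops_def)
    show ?thesis unfolding r Bset_def using zB' by (elim disjE; simp)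
  next
    case 3
    have ne: "h \<noteq> 1" "h \<noteq> n - 1" using 3 n3 by auto
    have ta: "\<And>y. s (h-1) a y a = a" "\<And>y. s (h-1) d y d = d" using tmid 3 by auto
    have r: "prod_ops n s h x y z = (x1 \<inter> z1, x2 \<inter> z2, x3 \<and> z3, s (h-1) x4 y4 z4)"
      using ne unfolding x y z by (simp add: prod_ops_def rops_def)
    show ?thesis unfolding r Bset_def
      using xB' zB' by (elim disjE; simp add: ta ta[simplified])
  qed
qed

lemma cong_Rel:
  assumes refl: "\<And>x. P x x" and sym: "\<And>x y. P x y \<Longrightarrow> P y x"
    and trans: "\<And>x y z. P x y \<Longrightarrow> P y z \<Longrightarrow> P x z"
    and compat: "\<And>h x x' y y' z z'. h\<in>{1..n-1} \<Longrightarrow> P x x' \<Longrightarrow> P y y' \<Longrightarrow> P z z' \<Longrightarrow>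
        P (t h x y z) (t h x' y' z')"
    and closed: "\<And>h x y z. h\<in>{1..n-1} \<Longrightarrow> x\<in>S \<Longrightarrow> y\<in>S \<Longrightarrow> z\<in>S \<Longrightarrow> t h x y z \<in> S"
  shows "congruence S n t {(x,y). x\<in>S \<and> y\<in>S \<and> P x y}"
  unfolding congruence_def equiv_def
proof (intro conjI ballI allI impI)
  show "{(x, y). x \<in> S \<and> y \<in> S \<and> P x y} \<subseteq> S \<times> S" by auto
  show "refl_on S {(x, y). x \<in> S \<and> y \<in> S \<and> P x y}" unfolding refl_on_def using refl by auto
  show "sym {(x, y). x \<in> S \<and> y \<in> S \<and> P x y}" unfolding sym_def using sym by auto
  show "trans {(x, y). x \<in> S \<and> y \<in> S \<and> P x y}" unfolding trans_def using trans by blast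
next
  fix h x x' y y' z z'
  assume "h \<in> {1..n - 1}" "(x, x') \<in> {(x, y). x \<in> S \<and> y \<in> S \<and> P x y}"
    "(y, y') \<in> {(x, y). x \<in> S \<and> y \<in> S \<and> P x y}" "(z, z') \<in> {(x, y). x \<in> S \<and> y \<in> S \<and> P x y}"
  then show "(t h x y z, t h x' y' z') \<in> {(x, y). x \<in> S \<and> y \<in> S \<and> P x y}"
    using compat closed by simp
qed

lemma rops_xyx: "rops n h x y x = (x::'a::boolean_algebra)"
  by (simp add: rops_def sup_commute)

lemma rops_xxz: "inf x (sup (- x) z) = inf x (z::'a::boolean_algebra)"
  by (simp add: inf_sup_distrib1)

lemma rops_zxx: "inf z (sup (- x) x) = (z::'a::boolean_algebra)"
  by simp

lemma E_idem:
  assumes n3: "n \<ge> 3" and t1: "\<And>x y z. s 0 x y z = x" and tn1: "\<And>x y z. s (n-2) x y z = z"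
    and tmid: "\<And>h x y. 2 \<le> h \<Longrightarrow> h \<le> n-2 \<Longrightarrow> s (h-1) x y x = x" and h: "h \<le> n"
  shows "ext_proj n (prod_ops n s) h x y x = x"
proof -
  have s4: "s (h - 1) w v w = w" if "1 \<le> h" "h \<le> n - 1" for w v
  proof -
    have "h = 1 \<or> h = n - 1 \<or> (2 \<le> h \<and> h \<le> n - 2)" using that n3 by arith
    then consider "h = 1" | "h = n - 1" | "2 \<le> h \<and> h \<le> n - 2" by blast
    then show ?thesis
    proof cases
      case 1 then show ?thesis using t1 by simp
    next
      case 2 then have "h - 1 = n - 2" by simp
      then show ?thesis using tn1 by simp
    qed (use tmid in auto)
  qed
  show ?thesis
  proof (cases "h = 0 \<or> h = n")
    case True then show ?thesis by (auto simp: ext_proj_def)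
  next
    case False
    then have "1 \<le> h" "h \<le> n - 1" using h by auto
    then show ?thesis using False s4 by (cases x) (simp add: ext_proj_def prod_ops_alt rops_xyx)
  qed
qed

lemma E_odd:
  assumes n4: "n \<ge> 4" and ev: "even n" and tn1: "\<And>x y z. s (n-2) x y z = z"
    and Je: "\<And>h x z. h < n - 2 \<Longrightarrow> even h \<Longrightarrow> s h x x z = s (Suc h) x x z"
    and h: "h < n" "odd h"
  shows "ext_proj n (prod_ops n s) h x x z = ext_proj n (prod_ops n s) (Suc h) x x z"
proof (cases "h = n - 1")
  case True
  then have "Suc h = n" "h \<noteq> 0" "h - 1 = n - 2" "h \<noteq> 1" using h n4 by auto
  then show ?thesis using True tn1
    by (cases z) (simp add: ext_proj_def prod_ops_alt rops_def)
next
  case False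
  have h0: "h \<noteq> 0" using h(2) by (intro notI) simp
  have on: "odd (n - 1)" "even (Suc h)" using ev n4 h by auto
  have "Suc h \<noteq> n - 1" using on by metis
  with False on h0 have hh: "h < n - 1" "h \<noteq> 0" "Suc h \<noteq> n" "Suc h \<noteq> n - 1" "Suc h \<noteq> 1" "h - 1 < n - 2" "even (h - 1)"
    using h n4 ev by auto
  have r1: "rops n h w w v = inf w v" for w v :: "'b::boolean_algebra"
    using hh by (auto simp: rops_def rops_xxz)
  have r2: "rops n (Suc h) w w v = inf w v" for w v :: "'b::boolean_algebra"
    using hh by (simp add: rops_def)
  have s4: "s (h - 1) w w v = s h w w v" for w v
    using Je[OF hh(6) hh(7)] hh(2) by simp
  have s4': "s (h - Suc 0) w w v = s h w w v" for w v using s4 by simp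
  have "h \<noteq> n" using h by simp
  then show ?thesis using hh by (simp add: ext_proj_def prod_ops_alt r1 r2 s4 s4')
qed

lemma E_even:
  assumes n4: "n \<ge> 4" and ev: "even n" and t1: "\<And>x y z. s 0 x y z = x"
    and Jo: "\<And>h x z. h < n - 2 \<Longrightarrow> odd h \<Longrightarrow> s h x z z = s (Suc h) x z z"
    and h: "h < n" "even h"
  shows "ext_proj n (prod_ops n s) h x z z = ext_proj n (prod_ops n s) (Suc h) x z z"
proof (cases "h = 0")
  case True
  then show ?thesis using t1 n4
    by (cases x) (simp add: ext_proj_def prod_ops_alt rops_def)
next
  case False
  have on: "odd (n - 1)" using ev n4 by simp
  have "h \<noteq> n - 1" using on h by auto
  with False have hh: "h \<noteq> n" "h \<noteq> 1" "h \<noteq> n - 1" "Suc h \<noteq> n" "Suc h \<noteq> 0" "Suc h \<noteq> 1" "h - 1 < n - 2" "odd (h - 1)"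
    using h n4 ev by auto
  have r1: "rops n h w v v = inf w v" for w v :: "'b::boolean_algebra"
    using hh by (simp add: rops_def)
  have r2: "rops n (Suc h) w v v = inf w v" for w v :: "'b::boolean_algebra"
    using hh by (auto simp: rops_def rops_xxz inf_commute)
  have s4: "s (h - 1) w v v = s h w v v" for w v
    using Jo[OF hh(7) hh(8)] False by simp
  have s4': "s (h - Suc 0) w v v = s h w v v" for w v using s4 by simp
  show ?thesis using hh False by (simp add: ext_proj_def prod_ops_alt r1 r2 s4 s4')
qed

lemma cong_B:
  assumes n3: "n \<ge> 3" and t1: "\<And>x y z. s 0 x y z = x" and tn1: "\<And>x y z. s (n-2) x y z = z"
    and tmid: "\<And>h x y. 2 \<le> h \<Longrightarrow> h \<le> n-2 \<Longrightarrow> s (h-1) x y x = x"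
    and th: "congruence (UNIV :: 'd set) n (A4_ops s) \<theta>"
    and fA: "\<And>h x y z x' y' z'. fA x = fA x' \<Longrightarrow> fA y = fA y' \<Longrightarrow> fA z = fA z' \<Longrightarrow>
               fA (rops n h x y z) = fA (rops n h x' y' z')"
    and fB: "\<And>h x y z x' y' z'. fB x = fB x' \<Longrightarrow> fB y = fB y' \<Longrightarrow> fB z = fB z' \<Longrightarrow>
               fB (rops n h x y z) = fB (rops n h x' y' z')"
    and fC: "\<And>h x y z x' y' z'. fC x = fC x' \<Longrightarrow> fC y = fC y' \<Longrightarrow> fC z = fC z' \<Longrightarrow>
               fC (rops n h x y z) = fC (rops n h x' y' z')"
  shows "congruence (Bset a d) n (prod_ops n s) {(x,y). x \<in> Bset a d \<and> y \<in> Bset a d \<and>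
     (fA (fst x) = fA (fst y) \<and> fB (fst (snd x)) = fB (fst (snd y)) \<and> fC (fst (snd (snd x))) = fC (fst (snd (snd y)))
      \<and> (snd (snd (snd x)), snd (snd (snd (y :: bool set \<times> bool set \<times> bool \<times> 'd)))) \<in> \<theta>)}"
proof (rule cong_Rel)
  from th have eq: "equiv UNIV \<theta>" and cp: "\<And>h x x' y y' z z'. h\<in>{1..n-1} \<Longrightarrow> (x,x') \<in> \<theta> \<Longrightarrow> (y,y') \<in> \<theta> \<Longrightarrow> (z,z') \<in> \<theta> \<Longrightarrow>
        (s (h - 1) x y z, s (h - 1) x' y' z') \<in> \<theta>"
    unfolding congruence_def A4_ops_def by blast+
  from eq have R: "(x,x) \<in> \<theta>" and S: "(x,y) \<in> \<theta> \<Longrightarrow> (y,x) \<in> \<theta>"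
    and T: "(x,y) \<in> \<theta> \<Longrightarrow> (y,z) \<in> \<theta> \<Longrightarrow> (x,z) \<in> \<theta>" for x y z
    unfolding equiv_def refl_on_def sym_def trans_def by blast+
  fix x y z x' y' z' :: "bool set \<times> bool set \<times> bool \<times> 'd" and h
  show "fA (fst x) = fA (fst x) \<and> fB (fst (snd x)) = fB (fst (snd x)) \<and> fC (fst (snd (snd x))) = fC (fst (snd (snd x))) \<and>
      (snd (snd (snd x)), snd (snd (snd x))) \<in> \<theta>" using R by simp
  show "fA (fst y) = fA (fst x) \<and> fB (fst (snd y)) = fB (fst (snd x)) \<and> fC (fst (snd (snd y))) = fC (fst (snd (snd x))) \<and>
      (snd (snd (snd y)), snd (snd (snd x))) \<in> \<theta>"
    if "fA (fst x) = fA (fst y) \<and> fB (fst (snd x)) = fB (fst (snd y)) \<and> fC (fst (snd (snd x))) = fC (fst (snd (snd y))) \<and>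
      (snd (snd (snd x)), snd (snd (snd y))) \<in> \<theta>"
    using that S by simp
  show "fA (fst x) = fA (fst z) \<and> fB (fst (snd x)) = fB (fst (snd z)) \<and> fC (fst (snd (snd x))) = fC (fst (snd (snd z))) \<and>
      (snd (snd (snd x)), snd (snd (snd z))) \<in> \<theta>"
    if a: "fA (fst x) = fA (fst y) \<and> fB (fst (snd x)) = fB (fst (snd y)) \<and> fC (fst (snd (snd x))) = fC (fst (snd (snd y))) \<and>
      (snd (snd (snd x)), snd (snd (snd y))) \<in> \<theta>"
    and b: "fA (fst y) = fA (fst z) \<and> fB (fst (snd y)) = fB (fst (snd z)) \<and> fC (fst (snd (snd y))) = fC (fst (snd (snd z))) \<and>
      (snd (snd (snd y)), snd (snd (snd z))) \<in> \<theta>"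
  proof -
    from a b have "(snd (snd (snd x)), snd (snd (snd z))) \<in> \<theta>" using T by blast
    with a b show ?thesis by simp
  qed
  show "prod_ops n s h x y z \<in> Bset a d" if "h \<in> {1..n - 1}" "x \<in> Bset a d" "y \<in> Bset a d" "z \<in> Bset a d"
    by (rule Bset_closed[OF n3 t1 tn1 tmid that])
  show "fA (fst (prod_ops n s h x y z)) = fA (fst (prod_ops n s h x' y' z')) \<and>
       fB (fst (snd (prod_ops n s h x y z))) = fB (fst (snd (prod_ops n s h x' y' z'))) \<and>
       fC (fst (snd (snd (prod_ops n s h x y z)))) = fC (fst (snd (snd (prod_ops n s h x' y' z')))) \<and>
       (snd (snd (snd (prod_ops n s h x y z))), snd (snd (snd (prod_ops n s h x' y' z')))) \<in> \<theta>"
    if hh: "h \<in> {1..n - 1}" and a: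
    "fA (fst x) = fA (fst x') \<and> fB (fst (snd x)) = fB (fst (snd x')) \<and> fC (fst (snd (snd x))) = fC (fst (snd (snd x'))) \<and>
      (snd (snd (snd x)), snd (snd (snd x'))) \<in> \<theta>"
    and b: "fA (fst y) = fA (fst y') \<and> fB (fst (snd y)) = fB (fst (snd y')) \<and> fC (fst (snd (snd y))) = fC (fst (snd (snd y'))) \<and>
      (snd (snd (snd y)), snd (snd (snd y'))) \<in> \<theta>"
    and c: "fA (fst z) = fA (fst z') \<and> fB (fst (snd z)) = fB (fst (snd z')) \<and> fC (fst (snd (snd z))) = fC (fst (snd (snd z'))) \<and>
      (snd (snd (snd z)), snd (snd (snd z'))) \<in> \<theta>"
  proof -
    have 1: "fA (rops n h (fst x) (fst y) (fst z)) = fA (rops n h (fst x') (fst y') (fst z'))"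
      by (rule fA) (use a b c in blast)+
    have 2: "fB (rops n h (fst (snd x)) (fst (snd y)) (fst (snd z))) = fB (rops n h (fst (snd x')) (fst (snd y')) (fst (snd z')))"
      by (rule fB) (use a b c in blast)+
    have 3: "fC (rops n h (fst (snd (snd x))) (fst (snd (snd y))) (fst (snd (snd z)))) = fC (rops n h (fst (snd (snd x'))) (fst (snd (snd y'))) (fst (snd (snd z'))))"
      by (rule fC) (use a b c in blast)+
    have 4: "(s (h - 1) (snd (snd (snd x))) (snd (snd (snd y))) (snd (snd (snd z))),
              s (h - 1) (snd (snd (snd x'))) (snd (snd (snd y'))) (snd (snd (snd z')))) \<in> \<theta>"
      by (rule cp[OF hh]) (use a b c in blast)+
    show ?thesis unfolding prod_ops_alt fst_conv snd_conv using 1 2 3 4 by blast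
  qed
qed

theorem theorem3p9:
  fixes n :: nat and s :: "'d top3"
  assumes n3: "n \<ge> 3"
    and t1: "\<And>x y z. s 0 x y z = x"
    and tn1: "\<And>x y z. s (n - 2) x y z = z"
    and tmid: "\<And>h x y. 2 \<le> h \<Longrightarrow> h \<le> n - 2 \<Longrightarrow> s (h - 1) x y x = x"
  shows "(even n \<and> jonsson (UNIV :: 'd set) (n - 2) s \<longrightarrow>
            (\<forall>a d. alvin (Bset a d) n (ext_proj n (prod_ops n s))))
       \<and> (\<forall>r \<alpha>' \<beta>' \<gamma>'. r \<ge> 1
            \<and> congruence (UNIV :: 'd set) n (A4_ops s) \<alpha>'
            \<and> congruence (UNIV :: 'd set) n (A4_ops s) \<beta>'
            \<and> congruence (UNIV :: 'd set) n (A4_ops s) \<gamma>'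
            \<and> \<not> (\<alpha>' \<inter> (\<beta>' O (\<alpha>' \<inter> \<gamma>') O \<beta>') \<subseteq> altc (\<alpha>' \<inter> \<gamma>') (\<alpha>' \<inter> \<beta>') r)
          \<longrightarrow> (\<exists>a d \<alpha> \<beta> \<gamma>.
                 congruence (Bset a d) n (prod_ops n s) \<alpha>
               \<and> congruence (Bset a d) n (prod_ops n s) \<beta>
               \<and> congruence (Bset a d) n (prod_ops n s) \<gamma>
               \<and> \<not> (\<alpha> \<inter> (\<beta> O (\<alpha> \<inter> \<gamma>) O \<beta>) \<subseteq> altc (\<alpha> \<inter> \<beta>) (\<alpha> \<inter> \<gamma>) (r + 2))))"
proof -
  have part1: "even n \<and> jonsson (UNIV :: 'd set) (n - 2) s \<longrightarrow>
            (\<forall>a d. alvin (Bset a d) n (ext_proj n (prod_ops n s)))"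
  proof (intro impI allI)
    fix a d
    assume A: "even n \<and> jonsson (UNIV :: 'd set) (n - 2) s"
    then have ev: "even n" and J: "jonsson (UNIV :: 'd set) (n - 2) s" by auto
    have n4: "n \<ge> 4" using n3 ev by presburger
    have Je: "\<And>h x z. h < n - 2 \<Longrightarrow> even h \<Longrightarrow> s h x x z = s (Suc h) x x z"
      using J unfolding jonsson_def by blast
    have Jo: "\<And>h x z. h < n - 2 \<Longrightarrow> odd h \<Longrightarrow> s h x z z = s (Suc h) x z z"
      using J unfolding jonsson_def by blast
    show "alvin (Bset a d) n (ext_proj n (prod_ops n s))"
      unfolding alvin_def
    proof (intro ballI conjI allI impI)
      fix x y z :: "bool set \<times> bool set \<times> bool \<times> 'd" and h
      show "ext_proj n (prod_ops n s) 0 x y z = x" by (simp add: ext_proj_def)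
      show "ext_proj n (prod_ops n s) n x y z = z" using n3 by (simp add: ext_proj_def)
      show "h \<le> n \<Longrightarrow> ext_proj n (prod_ops n s) h x y x = x"
        using E_idem[where s=s and n=n, OF n3 t1 tn1 tmid] by blast
      show "h < n \<Longrightarrow> odd h \<Longrightarrow> ext_proj n (prod_ops n s) h x x z = ext_proj n (prod_ops n s) (Suc h) x x z"
        using E_odd[where s=s and n=n, OF n4 ev tn1 Je] by blast
      show "h < n \<Longrightarrow> even h \<Longrightarrow> ext_proj n (prod_ops n s) h x z z = ext_proj n (prod_ops n s) (Suc h) x z z"
        using E_even[where s=s and n=n, OF n4 ev t1 Jo] by blast
    qed
  qed
  have part2: "\<forall>r \<alpha>' \<beta>' \<gamma>'. r \<ge> 1
            \<and> congruence (UNIV :: 'd set) n (A4_ops s) \<alpha>'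
            \<and> congruence (UNIV :: 'd set) n (A4_ops s) \<beta>'
            \<and> congruence (UNIV :: 'd set) n (A4_ops s) \<gamma>'
            \<and> \<not> (\<alpha>' \<inter> (\<beta>' O (\<alpha>' \<inter> \<gamma>') O \<beta>') \<subseteq> altc (\<alpha>' \<inter> \<gamma>') (\<alpha>' \<inter> \<beta>') r)
          \<longrightarrow> (\<exists>a d \<alpha> \<beta> \<gamma>.
                 congruence (Bset a d) n (prod_ops n s) \<alpha>
               \<and> congruence (Bset a d) n (prod_ops n s) \<beta>
               \<and> congruence (Bset a d) n (prod_ops n s) \<gamma>
               \<and> \<not> (\<alpha> \<inter> (\<beta> O (\<alpha> \<inter> \<gamma>) O \<beta>) \<subseteq> altc (\<alpha> \<inter> \<beta>) (\<alpha> \<inter> \<gamma>) (r + 2)))"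
  proof (intro allI impI)
    fix r \<alpha>' \<beta>' \<gamma>'
    assume H: "r \<ge> 1
            \<and> congruence (UNIV :: 'd set) n (A4_ops s) \<alpha>'
            \<and> congruence (UNIV :: 'd set) n (A4_ops s) \<beta>'
            \<and> congruence (UNIV :: 'd set) n (A4_ops s) \<gamma>'
            \<and> \<not> (\<alpha>' \<inter> (\<beta>' O (\<alpha>' \<inter> \<gamma>') O \<beta>') \<subseteq> altc (\<alpha>' \<inter> \<gamma>') (\<alpha>' \<inter> \<beta>') r)"
    then have ca: "congruence (UNIV :: 'd set) n (A4_ops s) \<alpha>'"
      and cb: "congruence (UNIV :: 'd set) n (A4_ops s) \<beta>'"
      and cg: "congruence (UNIV :: 'd set) n (A4_ops s) \<gamma>'" by auto
    from H obtain p q where pq: "(p,q) \<in> \<alpha>'" "(p,q) \<in> \<beta>' O (\<alpha>' \<inter> \<gamma>') O \<beta>'"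
      and npq: "(p,q) \<notin> altc (\<alpha>' \<inter> \<gamma>') (\<alpha>' \<inter> \<beta>') r" by auto
    from pq(2) obtain e1 e2 where e: "(p,e1) \<in> \<beta>'" "(e1,e2) \<in> \<alpha>'" "(e1,e2) \<in> \<gamma>'" "(e2,q) \<in> \<beta>'" by auto
    let ?B = "Bset p q"
    define \<alpha> where "\<alpha> = {(x,y). x \<in> ?B \<and> y \<in> ?B \<and>
      fst (snd (snd x)) = fst (snd (snd y))
      \<and> (snd (snd (snd x)), snd (snd (snd (y :: bool set \<times> bool set \<times> bool \<times> 'd)))) \<in> \<alpha>'}"
    define \<beta> where "\<beta> = {(x,y). x \<in> ?B \<and> y \<in> ?B \<and>
     (True \<in> fst x) = (True \<in> fst y) \<and> (True \<in> fst (snd x)) = (True \<in> fst (snd y))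
      \<and> (snd (snd (snd x)), snd (snd (snd (y :: bool set \<times> bool set \<times> bool \<times> 'd)))) \<in> \<beta>'}"
    define \<gamma> where "\<gamma> = {(x,y). x \<in> ?B \<and> y \<in> ?B \<and>
     (False \<in> fst x) = (False \<in> fst y) \<and> (False \<in> fst (snd x)) = (False \<in> fst (snd y)) \<and> fst (snd (snd x)) = fst (snd (snd y))
      \<and> (snd (snd (snd x)), snd (snd (snd (y :: bool set \<times> bool set \<times> bool \<times> 'd)))) \<in> \<gamma>'}"
    have Ca: "congruence ?B n (prod_ops n s) \<alpha>"
    proof -
      have "congruence ?B n (prod_ops n s) {(x,y). x \<in> ?B \<and> y \<in> ?B \<and>
     ((\<lambda>_::bool set. ()) (fst x) = (\<lambda>_::bool set. ()) (fst y) \<and> (\<lambda>_::bool set. ()) (fst (snd x)) = (\<lambda>_::bool set. ()) (fst (snd y)) \<and> (\<lambda>b::bool. b) (fst (snd (snd x))) = (\<lambda>b::bool. b) (fst (snd (snd y)))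
      \<and> (snd (snd (snd x)), snd (snd (snd (y :: bool set \<times> bool set \<times> bool \<times> 'd)))) \<in> \<alpha>')}"
        by (rule cong_B[where fA="\<lambda>_::bool set. ()" and fB="\<lambda>_::bool set. ()" and fC="\<lambda>b::bool. b", OF n3 t1 tn1 tmid ca]) simp_all
      then show ?thesis unfolding \<alpha>_def by simp
    qed
    have Cb: "congruence ?B n (prod_ops n s) \<beta>"
    proof -
      have "congruence ?B n (prod_ops n s) {(x,y). x \<in> ?B \<and> y \<in> ?B \<and>
     ((\<lambda>X. True \<in> X) (fst x) = (\<lambda>X. True \<in> X) (fst y) \<and> (\<lambda>X. True \<in> X) (fst (snd x)) = (\<lambda>X. True \<in> X) (fst (snd y)) \<and> (\<lambda>_::bool. ()) (fst (snd (snd x))) = (\<lambda>_::bool. ()) (fst (snd (snd y)))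
      \<and> (snd (snd (snd x)), snd (snd (snd (y :: bool set \<times> bool set \<times> bool \<times> 'd)))) \<in> \<beta>')}"
        by (rule cong_B[where fA="\<lambda>X. True \<in> X" and fB="\<lambda>X. True \<in> X" and fC="\<lambda>_::bool. ()", OF n3 t1 tn1 tmid cb]) (simp_all add: rops_def)
      then show ?thesis unfolding \<beta>_def by simp
    qed
    have Cg: "congruence ?B n (prod_ops n s) \<gamma>"
    proof -
      have "congruence ?B n (prod_ops n s) {(x,y). x \<in> ?B \<and> y \<in> ?B \<and>
     ((\<lambda>X. False \<in> X) (fst x) = (\<lambda>X. False \<in> X) (fst y) \<and> (\<lambda>X. False \<in> X) (fst (snd x)) = (\<lambda>X. False \<in> X) (fst (snd y)) \<and> (\<lambda>b::bool. b) (fst (snd (snd x))) = (\<lambda>b::bool. b) (fst (snd (snd y)))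
      \<and> (snd (snd (snd x)), snd (snd (snd (y :: bool set \<times> bool set \<times> bool \<times> 'd)))) \<in> \<gamma>')}"
        by (rule cong_B[where fA="\<lambda>X. False \<in> X" and fB="\<lambda>X. False \<in> X" and fC="\<lambda>b::bool. b", OF n3 t1 tn1 tmid cg]) (simp_all add: rops_def)
      then show ?thesis unfolding \<gamma>_def by simp
    qed
    define u where "u = (UNIV :: bool set, {} :: bool set, True, p)"
    define v where "v = ({} :: bool set, UNIV :: bool set, True, q)"
    define w1 where "w1 = ({True}, {False}, False, e1)"
    define w2 where "w2 = ({} :: bool set, UNIV :: bool set, False, e2)"
    have mem: "u \<in> ?B" "v \<in> ?B" "w1 \<in> ?B" "w2 \<in> ?B"
      unfolding u_def v_def w1_def w2_def Bset_def by auto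
    have "(u,v) \<in> \<alpha>" using mem pq(1) unfolding \<alpha>_def u_def v_def by simp
    moreover have "(u,w1) \<in> \<beta>" using mem e(1) unfolding \<beta>_def u_def w1_def by simp
    moreover have "(w1,w2) \<in> \<alpha> \<inter> \<gamma>" using mem e(2,3) unfolding \<alpha>_def \<gamma>_def w2_def w1_def by simp
    moreover have "(w2,v) \<in> \<beta>" using mem e(4) unfolding \<beta>_def v_def w2_def by simp
    ultimately have uv: "(u,v) \<in> \<alpha> \<inter> (\<beta> O (\<alpha> \<inter> \<gamma>) O \<beta>)" by blast
    have nuv: "(u,v) \<notin> altc (\<alpha> \<inter> \<beta>) (\<alpha> \<inter> \<gamma>) (r + 2)"
    proof
      assume "(u,v) \<in> altc (\<alpha> \<inter> \<beta>) (\<alpha> \<inter> \<gamma>) (r + 2)"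
      then have "(u,v) \<in> (\<alpha> \<inter> \<beta>) O (altc (\<alpha> \<inter> \<gamma>) (\<alpha> \<inter> \<beta>) r O (if even r then \<alpha> \<inter> \<gamma> else \<alpha> \<inter> \<beta>))"
        using altc_Suc_right[of "\<alpha> \<inter> \<gamma>" "\<alpha> \<inter> \<beta>" r] by simp
      then obtain z1 w where z1: "(u,z1) \<in> \<alpha> \<inter> \<beta>" and zw: "(z1,w) \<in> altc (\<alpha> \<inter> \<gamma>) (\<alpha> \<inter> \<beta>) r"
        and wv: "(w,v) \<in> \<alpha> \<inter> \<beta> \<or> (w,v) \<in> \<alpha> \<inter> \<gamma>"
        by (auto split: if_splits)
      obtain Z1 Z2 Z3 Z4 where Z: "z1 = (Z1,Z2,Z3,Z4)" by (cases z1)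
      obtain W1 W2 W3 W4 where W: "w = (W1,W2,W3,W4)" by (cases w)
      from z1 have "Z3 = True" "True \<in> Z1" "z1 \<in> ?B" unfolding \<alpha>_def \<beta>_def u_def Z by auto
      then have Z4: "Z4 = p" unfolding Z Bset_def by auto
      from wv have "W3 = True" "W2 \<noteq> {}" "w \<in> ?B" unfolding \<alpha>_def \<beta>_def \<gamma>_def v_def W by auto
      then have W4: "W4 = q" unfolding W Bset_def by auto
      have "(snd (snd (snd z1)), snd (snd (snd w))) \<in> altc (\<alpha>' \<inter> \<gamma>') (\<alpha>' \<inter> \<beta>') r"
        by (rule altc_proj[OF zw]) (auto simp: \<alpha>_def \<beta>_def \<gamma>_def)
      then show False using npq Z4 W4 unfolding Z W by simp
    qed
    show "\<exists>a d \<alpha> \<beta> \<gamma>.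
                 congruence (Bset a d) n (prod_ops n s) \<alpha>
               \<and> congruence (Bset a d) n (prod_ops n s) \<beta>
               \<and> congruence (Bset a d) n (prod_ops n s) \<gamma>
               \<and> \<not> (\<alpha> \<inter> (\<beta> O (\<alpha> \<inter> \<gamma>) O \<beta>) \<subseteq> altc (\<alpha> \<inter> \<beta>) (\<alpha> \<inter> \<gamma>) (r + 2))"
    proof (rule exI[of _ p], rule exI[of _ q], rule exI[of _ \<alpha>], rule exI[of _ \<beta>], rule exI[of _ \<gamma>], intro conjI Ca Cb Cg notI)
      assume "\<alpha> \<inter> (\<beta> O (\<alpha> \<inter> \<gamma>) O \<beta>) \<subseteq> altc (\<alpha> \<inter> \<beta>) (\<alpha> \<inter> \<gamma>) (r + 2)"
      from subsetD[OF this uv] nuv show False by contradiction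
    qed
  qed
  show ?thesis using part1 part2 by (rule conjI)
qed

end
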